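(* Let $R\ge1$, $\mathbf{x}=(x_1,\dots,x_R)$ pairwise distinct reals and $\mathbf{c}=(c_1,\dots,c_R)\in\mathbb{R}^R$. (a) If $\mathbf{u}=(u_1,\dots,u_R)^T\in\mathbb{C}^R$ is an eigenvector of $A(\mathbf{x})$ for the eigenvalue $i\mu$ ($\mu\in\mathbb{R}$), then for every $1\le n\le R$, $$\mu^2|u_n|^2=\sum_{m=1}^R a_{m,n}^2\big(|u_m|^2+2\,\Re(u_n\overline{u_m})\big).$$ (b) If $\mathbf{u}\in\mathbb{C}^R$ is an eigenvector of $B(\mathbf{x},\mathbf{c})$ for the eigenvalue $i\mu$ ($\mu\in\mathbb{R}$), then for every $1\le n\le R$, $$\mu^2|u_n|^2=\sum_{m=1}^R a_{m,n}^2\big(c_n^2c_m^2|u_m|^2+2\,c_n^3c_m\,\Re(u_n\overline{u_m})\big).$$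
   Context: $A(\mathbf{x})$ is the $R\times R$ matrix with entries $a_{m,m}=0$ and $a_{m,n}=\frac{1}{x_m-x_n}$ for $m\ne n$. $B(\mathbf{x},\mathbf{c})$ is the $R\times R$ matrix with entries $b_{m,n}=c_mc_na_{m,n}$. Both matrices are real antisymmetric, so their eigenvalues are purely imaginary. *)

theory Defs
  imports "HOL-Analysis.Analysis"
begin

text \<open>The matrix A(x): a_{m,m} = 0, a_{m,n} = 1/(x_m - x_n) for m \<noteq> n.
  Indices range over a finite type 'n with CARD('n) = R.\<close>
definition A_mat :: "real^'n \<Rightarrow> real^'n^'n" where
  "A_mat x = (\<chi> m n. if m = n then 0 else 1 / (x$m - x$n))"

definition B_mat :: "real^'n \<Rightarrow> real^'n \<Rightarrow> real^'n^'n" where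
  "B_mat x c = (\<chi> m n. c$m * c$n * (A_mat x)$m$n)"

definition cmat :: "real^'n^'m \<Rightarrow> complex^'n^'m" where
  "cmat M = (\<chi> i j. complex_of_real (M$i$j))"

definition is_eigvec :: "real^'n^'n \<Rightarrow> complex \<Rightarrow> complex^'n \<Rightarrow> bool" where
  "is_eigvec M ev u \<longleftrightarrow> u \<noteq> 0 \<and> cmat M *v u = ev *s u"

end

theory Submission
  imports Defs
begin

lemma ident_real:
  fixes p q r :: real
  assumes "p \<noteq> q" "p \<noteq> r" "q \<noteq> r"
  shows "(1/(p-q)) * (1/(p-r)) = (1/(q-r)) * (1/(p-q) - 1/(p-r))"
  using assms by (simp add: field_simps) 

lemma sum_if_outer:
  fixes g :: "'n::finite \<Rightarrow> complex" and n :: 'n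
  shows "(\<Sum>m\<in>UNIV. \<Sum>k\<in>UNIV. if m = n then g k else 0) = (\<Sum>k\<in>UNIV. g k)"
proof -
  have "(\<Sum>m\<in>UNIV. \<Sum>k\<in>UNIV. if m = n then g k else 0) = (\<Sum>m\<in>UNIV. if m = n then (\<Sum>k\<in>UNIV. g k) else 0)"
    by (intro sum.cong refl) auto
  also have "\<dots> = (\<Sum>k\<in>UNIV. g k)" by (rule trans[OF sum.delta]) auto
  finally show ?thesis .
qed

lemma key:
  fixes a :: "'n::finite \<Rightarrow> 'n \<Rightarrow> real" and v w :: "'n \<Rightarrow> complex"
  assumes anti: "\<And>m k. a m k = - a k m"
  and ident: "\<And>m k. a n m * a n k = a m k * (a n m - a n k) + (if m=k then (a n m)^2 else 0)
        + (if m = n then (a n k)^2 else 0) + (if k=n then (a n m)^2 else 0)"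
  and w: "\<And>m. w m = (\<Sum>k\<in>UNIV. of_real (a m k) * v k)"
  and vim: "\<And>m. Re (v m * cnj (w m)) = 0"
  shows "(cmod (w n))^2 = (\<Sum>m\<in>UNIV. (a n m)^2 * (cmod (v m))^2)
          + 2 * Re (v n * (\<Sum>k\<in>UNIV. of_real ((a n k)^2) * cnj (v k)))"
proof -
  have cw: "cnj (w m) = (\<Sum>k\<in>UNIV. of_real (a m k) * cnj (v k))" for m
    by (simp add: w)
  have mw: "(\<Sum>m\<in>UNIV. of_real (a m k) * v m) = - w k" for k
  proof -
    have "(\<Sum>m\<in>UNIV. of_real (a m k) * v m) = (\<Sum>m\<in>UNIV. - (of_real (a k m) * v m))"
      by (intro sum.cong refl) (subst anti, simp)
    then show ?thesis by (simp add: w sum_negf)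
  qed
  have z: "v m * cnj (w m) + cnj (v m) * w m = 0" for m
  proof -
    have "v m * cnj (w m) + cnj (v m) * w m = of_real (2 * Re (v m * cnj (w m)))"
      by (simp add: complex_eq_iff)
    also have "\<dots> = 0" by (simp only: vim mult_zero_right of_real_0)
    finally show ?thesis .
  qed
  define S1 where "S1 = (\<Sum>m\<in>UNIV. \<Sum>k\<in>UNIV. of_real (a m k * a n m) * v m * cnj (v k))"
  define S2 where "S2 = (\<Sum>m\<in>UNIV. \<Sum>k\<in>UNIV. of_real (a m k * a n k) * v m * cnj (v k))"
  define D where "D = (\<Sum>m\<in>UNIV. of_real ((a n m)^2) * v m * cnj (v m))"
  define E where "E = v n * (\<Sum>k\<in>UNIV. of_real ((a n k)^2) * cnj (v k))"
  define F where "F = cnj (v n) * (\<Sum>m\<in>UNIV. of_real ((a n m)^2) * v m)"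
  have S1e: "S1 = (\<Sum>m\<in>UNIV. of_real (a n m) * v m * cnj (w m))"
    unfolding S1_def cw by (simp add: sum_distrib_left mult_ac)
  have S2e: "S2 = (\<Sum>k\<in>UNIV. of_real (a n k) * cnj (v k) * (- w k))"
    unfolding S2_def mw[symmetric] by (subst sum.swap) (simp add: sum_distrib_left mult_ac)
  have S12: "S1 - S2 = 0"
  proof -
    have "S1 - S2 = (\<Sum>m\<in>UNIV. of_real (a n m) * (v m * cnj (w m) + cnj (v m) * w m))"
      unfolding S1e S2e by (simp add: sum_subtractf[symmetric] algebra_simps)
    thus ?thesis using z by simp
  qed
  have "w n * cnj (w n) = (\<Sum>m\<in>UNIV. \<Sum>k\<in>UNIV. of_real (a n m * a n k) * v m * cnj (v k))"
    unfolding cw w[of n] by (simp add: sum_distrib_left sum_distrib_right mult_ac) (subst sum.swap, simp add: mult_ac)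
  also have "\<dots> = (\<Sum>m\<in>UNIV. \<Sum>k\<in>UNIV. of_real (a m k * a n m) * v m * cnj (v k)
        - of_real (a m k * a n k) * v m * cnj (v k)
        + (if m=k then of_real ((a n m)^2) * v m * cnj (v m) else 0)
        + (if m=n then v n * (of_real ((a n k)^2) * cnj (v k)) else 0)
        + (if k=n then cnj (v n) * (of_real ((a n m)^2) * v m) else 0))"
    by (intro sum.cong refl, subst ident) (auto simp: algebra_simps)
  also have "\<dots> = S1 - S2 + D + E + F"
    unfolding S1_def S2_def D_def E_def F_def
    apply (simp only: sum.distrib sum_subtractf)
    apply (simp add: sum_if_outer sum.delta' sum_distrib_left)
    done
  finally have eq: "w n * cnj (w n) = D + E + F" using S12 by simp
  have n2: "(cmod z)^2 = Re (z * cnj z)" for z :: complex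
    by (metis Re_complex_of_real complex_norm_square of_real_power)
  have FE: "F = cnj E" unfolding F_def E_def by (simp add: cnj_sum)
  have ReD: "Re D = (\<Sum>m\<in>UNIV. (a n m)^2 * (cmod (v m))^2)"
    unfolding D_def Re_sum
  proof (intro sum.cong refl)
    fix m
    have "complex_of_real ((a n m)^2) * v m * cnj (v m) = complex_of_real ((a n m)^2) * (v m * cnj (v m))"
      by (simp add: mult.assoc)
    also have "Re \<dots> = (a n m)^2 * Re (v m * cnj (v m))" by simp
    finally show "Re (complex_of_real ((a n m)^2) * v m * cnj (v m)) = (a n m)^2 * (cmod (v m))^2"
      by (simp add: n2)
  qed
  have "(cmod (w n))^2 = Re (w n * cnj (w n))" by (rule n2)
  also have "\<dots> = Re D + 2 * Re E" using eq FE by simp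
  finally show ?thesis unfolding ReD E_def .
qed

lemma Bcase:
  fixes x c :: "real^'n" and u :: "complex^'n" and \<mu> :: real
  assumes distinct: "inj (\<lambda>i. x$i)"
  and ev: "is_eigvec (B_mat x c) (\<i> * complex_of_real \<mu>) u"
  shows "\<mu>^2 * (cmod (u$n))^2 =
              (\<Sum>m\<in>UNIV. ((A_mat x)$m$n)^2 *
                 ((c$n)^2 * (c$m)^2 * (cmod (u$m))^2
                  + 2 * (c$n)^3 * c$m * Re (u$n * cnj (u$m))))"
proof -
  define a where "a m k = (A_mat x)$m$k" for m k
  have ad: "a m k = (if m = k then 0 else 1 / (x$m - x$k))" for m k
    by (simp add: a_def A_mat_def)
  have xne: "m \<noteq> k \<Longrightarrow> x$m \<noteq> x$k" for m k using distinct by (auto dest: injD)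
  have anti: "a m k = - a k m" for m k
    by (cases "m = k") (simp_all add: ad xne divide_simps)
  have ident: "a n m * a n k = a m k * (a n m - a n k) + (if m=k then (a n m)^2 else 0)
        + (if m = n then (a n k)^2 else 0) + (if k=n then (a n m)^2 else 0)" for m k
  proof (cases "m = k")
    case True thus ?thesis by (simp add: ad power2_eq_square)
  next
    case mk: False
    show ?thesis
    proof (cases "m = n")
      case True thus ?thesis using mk by (simp add: ad power2_eq_square)
    next
      case mn: False
      show ?thesis
      proof (cases "k = n")
        case True thus ?thesis using mk mn anti[of m n] by (simp add: ad[of n n] power2_eq_square)
      next
        case False
        thus ?thesis using mk mn ident_real[of "x$n" "x$m" "x$k"] xne[of n m] xne[of n k] xne[of m k]
          by (simp add: ad)
      qed
    qed
  qed
  define v where "v k = complex_of_real (c$k) * u$k" for k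
  define w where "w m = (\<Sum>k\<in>UNIV. of_real (a m k) * v k)" for m
  have eq: "(\<Sum>k\<in>UNIV. complex_of_real (c$m * c$k * a m k) * u$k) = \<i> * complex_of_real \<mu> * u$m" for m
  proof -
    have "(cmat (B_mat x c) *v u)$m = ((\<i> * complex_of_real \<mu>) *s u)$m"
      using ev unfolding is_eigvec_def by simp
    thus ?thesis by (simp add: matrix_vector_mult_def cmat_def B_mat_def a_def)
  qed
  have cw: "of_real (c$m) * w m = \<i> * complex_of_real \<mu> * u$m" for m
    unfolding eq[symmetric] w_def v_def by (simp add: sum_distrib_left mult_ac)
  have vim: "Re (v m * cnj (w m)) = 0" for m
  proof -
    have "v m * cnj (w m) = u$m * cnj (of_real (c$m) * w m)" by (simp add: v_def mult_ac)
    also have "\<dots> = - \<i> * of_real \<mu> * (u$m * cnj (u$m))" by (simp add: cw)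
    also have "\<dots> = - \<i> * of_real (\<mu> * (cmod (u$m))^2)" by (simp add: complex_norm_square[symmetric] mult_ac)
    finally show ?thesis by simp
  qed
  have K: "(cmod (w n))^2 = (\<Sum>m\<in>UNIV. (a n m)^2 * (cmod (v m))^2)
          + 2 * Re (v n * (\<Sum>k\<in>UNIV. of_real ((a n k)^2) * cnj (v k)))"
    by (rule key[OF anti ident w_def vim])
  have "\<mu>^2 * (cmod (u$n))^2 = (cmod (\<i> * complex_of_real \<mu> * u$n))^2"
    by (simp add: norm_mult power_mult_distrib)
  also have "\<dots> = (c$n)^2 * (cmod (w n))^2"
    by (simp add: cw[symmetric] norm_mult power_mult_distrib)
  also have "\<dots> = (c$n)^2 * ((\<Sum>m\<in>UNIV. (a n m)^2 * (c$m)^2 * (cmod (u$m))^2)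
          + 2 * (\<Sum>k\<in>UNIV. (a n k)^2 * c$n * c$k * Re (u$n * cnj (u$k))))"
    unfolding K
    apply (simp add: v_def norm_mult power_mult_distrib sum_distrib_left mult_ac)
    apply (rule disjI2, rule sum.cong, simp, simp add: algebra_simps)
    done
  also have "\<dots> = (\<Sum>m\<in>UNIV. (a m n)^2 *
                 ((c$n)^2 * (c$m)^2 * (cmod (u$m))^2
                  + 2 * (c$n)^3 * c$m * Re (u$n * cnj (u$m))))"
  proof -
    have sq: "(a n m)^2 = (a m n)^2" for m using anti[of n m] by simp
    show ?thesis unfolding sq
      apply (simp only: sum_distrib_left distrib_left sum.distrib[symmetric])
      apply (rule sum.cong[OF refl])
      apply (simp add: power2_eq_square power3_eq_cube algebra_simps)
      done
  qed
  finally show ?thesis by (simp add: a_def)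
qed

theorem lemma5:
  fixes x c :: "real^'n"
  assumes distinct: "inj (\<lambda>i. x$i)"
  shows "(\<forall>(u::complex^'n) (\<mu>::real) n.
            is_eigvec (A_mat x) (\<i> * complex_of_real \<mu>) u \<longrightarrow>
            \<mu>^2 * (cmod (u$n))^2 =
              (\<Sum>m\<in>UNIV. ((A_mat x)$m$n)^2 *
                 ((cmod (u$m))^2 + 2 * Re (u$n * cnj (u$m)))))
       \<and> (\<forall>(u::complex^'n) (\<mu>::real) n.
            is_eigvec (B_mat x c) (\<i> * complex_of_real \<mu>) u \<longrightarrow>
            \<mu>^2 * (cmod (u$n))^2 =
              (\<Sum>m\<in>UNIV. ((A_mat x)$m$n)^2 *
                 ((c$n)^2 * (c$m)^2 * (cmod (u$m))^2
                  + 2 * (c$n)^3 * c$m * Re (u$n * cnj (u$m)))))"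
proof (intro conjI allI impI)
  fix u :: "complex^'n" and \<mu> :: real and n
  assume "is_eigvec (B_mat x c) (\<i> * complex_of_real \<mu>) u"
  from Bcase[OF distinct this] show "\<mu>^2 * (cmod (u$n))^2 =
              (\<Sum>m\<in>UNIV. ((A_mat x)$m$n)^2 *
                 ((c$n)^2 * (c$m)^2 * (cmod (u$m))^2
                  + 2 * (c$n)^3 * c$m * Re (u$n * cnj (u$m))))" .
next
  fix u :: "complex^'n" and \<mu> :: real and n
  assume h: "is_eigvec (A_mat x) (\<i> * complex_of_real \<mu>) u"
  have "B_mat x 1 = A_mat x" by (simp add: B_mat_def vec_eq_iff)
  with h have "is_eigvec (B_mat x 1) (\<i> * complex_of_real \<mu>) u" by simp
  from Bcase[OF distinct this, of n] show "\<mu>^2 * (cmod (u$n))^2 =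
              (\<Sum>m\<in>UNIV. ((A_mat x)$m$n)^2 *
                 ((cmod (u$m))^2 + 2 * Re (u$n * cnj (u$m))))" by simp
qed

end
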